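(* Let $W$ be a finite Weyl group acting on a real inner product space $V$, with positive system $\Phi_+$ and Weyl arrangement $\mathcal{A}=\{H_\alpha\mid\alpha\in\Phi_+\}$, and let $\mathbf{a},\mathbf{b}:\mathcal{A}\to\mathbb{Z}_{\ge0}$ be multiplicities. Let $\overline{H_\infty}=\{x_0=0\}\subset\mathbb{R}\oplus V$. Then: (i) for any $X\in L\left(\mathbf{c}\left(\mathcal{A}^{[-\mathbf{a},\mathbf{b}]}\right)\right)$ with $X\subseteq\overline{H_\infty}$, there exists a unique $Y\in L(\mathcal{A})$ such that $X=\mathbf{c}Y\cap\overline{H_\infty}$; (ii) for such $X$ and $Y$, $$\left(\mathbf{c}\left(\mathcal{A}^{[-\mathbf{a},\mathbf{b}]}\right)\right)_X=\mathbf{c}\left((\mathcal{A}_Y)^{[-\mathbf{a}_Y,\mathbf{b}_Y]}\right)=\mathbf{c}\left(\mathcal{A}(W_Y)^{[-\mathbf{a}_Y,\mathbf{b}_Y]}\right),$$ where $\mathbf{a}_Y,\mathbf{b}_Y$ are the restrictions of $\mathbf{a},\mathbf{b}$ to $\mathcal{A}_Y$.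
   Context: For $\alpha\in\Phi_+$ and $k\in\mathbb{Z}$, $H_\alpha=\{\alpha=0\}$ and $H_{\alpha,k}=\{\alpha=k\}$. For a subarrangement $\mathcal{B}\subseteq\mathcal{A}$ and multiplicities $\mathbf{a},\mathbf{b}$ on $\mathcal{B}$, the deformation is the affine arrangement $\mathcal{B}^{[-\mathbf{a},\mathbf{b}]}=\{H_{\alpha,k}\mid \alpha\in\Phi_+,\ H_\alpha\in\mathcal{B},\ k\in\mathbb{Z},\ -\mathbf{a}(H_\alpha)\le k\le\mathbf{b}(H_\alpha)\}$. The coning $\mathbf{c}(\mathcal{C})$ of an affine arrangement $\mathcal{C}$ in $V$ is the central arrangement in $\mathbb{R}\oplus V$ (extra coordinate $x_0$) consisting of $\overline{H_\infty}=\{x_0=0\}$ together with $\mathbf{c}H=\{\alpha-kx_0=0\}$ for each $H=\{\alpha=k\}\in\mathcal{C}$. $L(\cdot)$ denotes the intersection lattice (the set of nonempty intersections of subsets of hyperplanes, including the whole space). For $Y=H_1\cap\dots\cap H_r\in L(\mathcal{A})$, $\mathbf{c}Y=\mathbf{c}H_1\cap\dots\cap\mathbf{c}H_r$. For a central arrangement $\mathcal{C}$ and an element $Z$ of its intersection lattice, the localization is $\mathcal{C}_Z=\{H\in\mathcal{C}\mid Z\subseteq H\}$. $W_Y$ is the parabolic subgroup of $W$ fixing $Y$ pointwise, and $\mathcal{A}(W_Y)$ is the arrangement of its reflecting hyperplanes. *)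

theory Defs
  imports "HOL-Analysis.Analysis"
begin

definition refl :: "'a::euclidean_space \<Rightarrow> 'a \<Rightarrow> 'a" where
  "refl u x = x - (2 * (x \<bullet> u) / (u \<bullet> u)) *\<^sub>R u"

definition root_system :: "'a::euclidean_space set \<Rightarrow> bool" where
  "root_system \<Phi> \<longleftrightarrow> finite \<Phi> \<and> span \<Phi> = UNIV \<and> 0 \<notin> \<Phi> \<and>
     (\<forall>\<alpha>\<in>\<Phi>. \<forall>c::real. c *\<^sub>R \<alpha> \<in> \<Phi> \<longrightarrow> c = 1 \<or> c = -1) \<and>
     (\<forall>\<alpha>\<in>\<Phi>. - \<alpha> \<in> \<Phi>) \<and>
     (\<forall>\<alpha>\<in>\<Phi>. refl \<alpha> ` \<Phi> = \<Phi>) \<and>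
     (\<forall>\<alpha>\<in>\<Phi>. \<forall>\<beta>\<in>\<Phi>. 2 * (\<beta> \<bullet> \<alpha>) / (\<alpha> \<bullet> \<alpha>) \<in> \<int>)"

definition positive_system :: "'a::euclidean_space set \<Rightarrow> 'a set \<Rightarrow> bool" where
  "positive_system \<Phi> P \<longleftrightarrow>
     (\<exists>v. (\<forall>\<alpha>\<in>\<Phi>. v \<bullet> \<alpha> \<noteq> 0) \<and> P = {\<alpha>\<in>\<Phi>. v \<bullet> \<alpha> > 0})"

inductive_set weyl_group :: "'a::euclidean_space set \<Rightarrow> ('a \<Rightarrow> 'a) set"
  for \<Phi> where
  id: "id \<in> weyl_group \<Phi>"
| step: "\<alpha> \<in> \<Phi> \<Longrightarrow> w \<in> weyl_group \<Phi> \<Longrightarrow> refl \<alpha> \<circ> w \<in> weyl_group \<Phi>"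

definition parabolic :: "'a::euclidean_space set \<Rightarrow> 'a set \<Rightarrow> ('a \<Rightarrow> 'a) set" where
  "parabolic \<Phi> Y = {w \<in> weyl_group \<Phi>. \<forall>y\<in>Y. w y = y}"

definition is_reflection :: "('a::euclidean_space \<Rightarrow> 'a) \<Rightarrow> bool" where
  "is_reflection w \<longleftrightarrow> (\<exists>u. u \<noteq> 0 \<and> w = refl u)"

definition refl_arr :: "('a::euclidean_space \<Rightarrow> 'a) set \<Rightarrow> 'a set set" where
  "refl_arr G = {{x. w x = x} | w. w \<in> G \<and> is_reflection w}"

definition hyp :: "'a::euclidean_space \<Rightarrow> 'a set" where
  "hyp \<alpha> = {x. \<alpha> \<bullet> x = 0}"

definition hypk :: "'a::euclidean_space \<Rightarrow> int \<Rightarrow> 'a set" where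
  "hypk \<alpha> k = {x. \<alpha> \<bullet> x = of_int k}"

definition deform :: "'a::euclidean_space set \<Rightarrow> 'a set set \<Rightarrow> ('a set \<Rightarrow> nat)
    \<Rightarrow> ('a set \<Rightarrow> nat) \<Rightarrow> 'a set set" where
  "deform P B a b = {hypk \<alpha> k | \<alpha> k. \<alpha> \<in> P \<and> hyp \<alpha> \<in> B \<and>
      - int (a (hyp \<alpha>)) \<le> k \<and> k \<le> int (b (hyp \<alpha>))}"

text \<open>Hyperplane at infinity {x0 = 0} in R (+) V; first component is x0.\<close>
definition Hinf :: "(real \<times> 'a::euclidean_space) set" where
  "Hinf = {p. fst p = 0}"

text \<open>Coning of an affine hyperplane H = {alpha = k}: {alpha - k x0 = 0}
  (independent of the chosen equation of H).\<close>
definition cone_hyp :: "'a::euclidean_space set \<Rightarrow> (real \<times> 'a) set" where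
  "cone_hyp H = {(x0, x). \<exists>\<alpha> k. \<alpha> \<noteq> 0 \<and> H = {y. \<alpha> \<bullet> y = k} \<and> \<alpha> \<bullet> x - k * x0 = 0}"

definition cone_arr :: "'a::euclidean_space set set \<Rightarrow> (real \<times> 'a) set set" where
  "cone_arr C = insert Hinf (cone_hyp ` C)"

text \<open>Coning of a flat Y of the central arrangement: cY = intersection of the
  cH_i with cH_i = {alpha_i = 0} in R (+) V, i.e. R x Y.\<close>
definition cone_flat :: "'a::euclidean_space set \<Rightarrow> (real \<times> 'a) set" where
  "cone_flat Y = UNIV \<times> Y"

text \<open>Intersection lattice (whole space = empty intersection).\<close>
definition lattice :: "'b set set \<Rightarrow> 'b set set" where
  "lattice C = {\<Inter> S | S. S \<subseteq> C \<and> \<Inter> S \<noteq> {}}"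

definition loc :: "'b set set \<Rightarrow> 'b set \<Rightarrow> 'b set set" where
  "loc C Z = {H \<in> C. Z \<subseteq> H}"

end

theory Submission
  imports Defs
begin

lemma cone_hyp_zero:
  fixes \<alpha> :: "'a::euclidean_space"
  assumes "\<alpha> \<noteq> 0"
  shows "((0::real), x) \<in> cone_hyp (hypk \<alpha> k) \<longleftrightarrow> \<alpha> \<bullet> x = 0"
proof
  assume "(0, x) \<in> cone_hyp (hypk \<alpha> k)"
  then obtain \<beta> m where b: "\<beta> \<noteq> 0" "hypk \<alpha> k = {y. \<beta> \<bullet> y = m}" "\<beta> \<bullet> x = 0"
    unfolding cone_hyp_def by auto
  define p where "p = (of_int k / (\<alpha> \<bullet> \<alpha>)) *\<^sub>R \<alpha>"
  have "\<alpha> \<bullet> p = of_int k" using assms by (simp add: p_def)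
  hence "p \<in> hypk \<alpha> k" by (simp add: hypk_def)
  hence "\<beta> \<bullet> p = m" using b by auto
  hence "\<beta> \<bullet> (p + x) = m" using b by (simp add: inner_add_right)
  hence "p + x \<in> hypk \<alpha> k" using b by auto
  hence "\<alpha> \<bullet> (p + x) = of_int k" by (simp add: hypk_def)
  thus "\<alpha> \<bullet> x = 0" using \<open>\<alpha> \<bullet> p = of_int k\<close> by (simp add: inner_add_right)
next
  assume "\<alpha> \<bullet> x = 0"
  thus "((0::real), x) \<in> cone_hyp (hypk \<alpha> k)"
    unfolding cone_hyp_def hypk_def using assms by auto
qed

theorem lemma3p1:
  fixes \<Phi> P :: "'a::euclidean_space set"
    and a b :: "'a set \<Rightarrow> nat"
    and X :: "(real \<times> 'a) set"
  assumes "root_system \<Phi>"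
    and "positive_system \<Phi> P"
    and "X \<in> lattice (cone_arr (deform P (hyp ` P) a b))"
    and "X \<subseteq> Hinf"
  shows "(\<exists>!Y. Y \<in> lattice (hyp ` P) \<and> X = cone_flat Y \<inter> Hinf) \<and>
         (\<forall>Y. Y \<in> lattice (hyp ` P) \<and> X = cone_flat Y \<inter> Hinf \<longrightarrow>
            loc (cone_arr (deform P (hyp ` P) a b)) X
              = cone_arr (deform P (loc (hyp ` P) Y) a b) \<and>
            cone_arr (deform P (loc (hyp ` P) Y) a b)
              = cone_arr (deform P (refl_arr (parabolic \<Phi> Y)) a b))"
proof -
  have PPhi: "P \<subseteq> \<Phi>" using assms(2) unfolding positive_system_def by auto
  have nz: "\<And>\<alpha>. \<alpha> \<in> P \<Longrightarrow> \<alpha> \<noteq> 0" using assms(1) PPhi unfolding root_system_def by auto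
  define D where "D = deform P (hyp ` P) a b"
  obtain S where S: "S \<subseteq> cone_arr D" "X = \<Inter>S"
    using assms(3) unfolding lattice_def D_def by auto
  have HinfX: "X \<subseteq> Hinf" by fact
  have uniq: "Y1 = Y2" if "cone_flat Y1 \<inter> Hinf = cone_flat Y2 \<inter> Hinf" for Y1 Y2 :: "'a set"
  proof -
    have "x \<in> Y1 \<longleftrightarrow> x \<in> Y2" for x
    proof -
      have "((0::real), x) \<in> cone_flat Y1 \<inter> Hinf \<longleftrightarrow> ((0::real), x) \<in> cone_flat Y2 \<inter> Hinf"
        using that by simp
      thus ?thesis by (simp add: cone_flat_def Hinf_def)
    qed
    thus ?thesis by auto
  qed
  define Y where "Y = {x. ((0::real), x) \<in> X}"
  define T where "T = {hyp \<alpha> | \<alpha> k. \<alpha> \<in> P \<and> cone_hyp (hypk \<alpha> k) \<in> S}"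
  have XY: "X = cone_flat Y \<inter> Hinf"
  proof
    show "X \<subseteq> cone_flat Y \<inter> Hinf"
    proof
      fix p assume p: "p \<in> X"
      then have "fst p = 0" using HinfX by (auto simp: Hinf_def)
      then show "p \<in> cone_flat Y \<inter> Hinf" using p
        by (cases p) (auto simp: Y_def cone_flat_def Hinf_def)
    qed
    show "cone_flat Y \<inter> Hinf \<subseteq> X"
      by (auto simp: Y_def cone_flat_def Hinf_def)
  qed
  have YT: "Y = \<Inter>T"
  proof (rule set_eqI)
    fix x
    have "x \<in> Y \<longleftrightarrow> (\<forall>H\<in>S. ((0::real), x) \<in> H)" by (simp add: Y_def S(2))
    also have "\<dots> \<longleftrightarrow> x \<in> \<Inter>T"
    proof
      assume A: "\<forall>H\<in>S. ((0::real), x) \<in> H"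
      show "x \<in> \<Inter>T"
      proof
        fix t assume "t \<in> T"
        then obtain \<alpha> k where t: "t = hyp \<alpha>" "\<alpha> \<in> P" "cone_hyp (hypk \<alpha> k) \<in> S"
          unfolding T_def by auto
        then have "\<alpha> \<bullet> x = 0" using A cone_hyp_zero[OF nz[OF t(2)]] by blast
        then show "x \<in> t" using t by (simp add: hyp_def)
      qed
    next
      assume A: "x \<in> \<Inter>T"
      show "\<forall>H\<in>S. ((0::real), x) \<in> H"
      proof
        fix H assume H: "H \<in> S"
        then have "H \<in> cone_arr D" using S by auto
        then consider "H = Hinf" | G where "G \<in> D" "H = cone_hyp G"
          unfolding cone_arr_def by auto
        then show "((0::real), x) \<in> H"
        proof cases
          case 1 then show ?thesis by (simp add: Hinf_def)
        next
          case 2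
          then obtain \<alpha> k where g: "G = hypk \<alpha> k" "\<alpha> \<in> P"
            unfolding D_def deform_def by auto
          then have "hyp \<alpha> \<in> T" using H 2 unfolding T_def by auto
          then have "\<alpha> \<bullet> x = 0" using A by (auto simp: hyp_def)
          then show ?thesis using cone_hyp_zero[OF nz[OF g(2)]] 2 g by simp
        qed
      qed
    qed
    finally show "x \<in> Y \<longleftrightarrow> x \<in> \<Inter>T" .
  qed
  have "0 \<in> Y" unfolding YT T_def by (auto simp: hyp_def)
  moreover have "T \<subseteq> hyp ` P" unfolding T_def by auto
  ultimately have Ylat: "Y \<in> lattice (hyp ` P)" unfolding lattice_def using YT by blast
  have part1: "\<exists>!Y. Y \<in> lattice (hyp ` P) \<and> X = cone_flat Y \<inter> Hinf"
    using Ylat XY uniq by metis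
  have part2: "loc (cone_arr D) X = cone_arr (deform P (loc (hyp ` P) Y') a b) \<and>
            cone_arr (deform P (loc (hyp ` P) Y') a b)
              = cone_arr (deform P (refl_arr (parabolic \<Phi> Y')) a b)"
    if XY': "X = cone_flat Y' \<inter> Hinf" for Y'
  proof
    have memX: "p \<in> X \<longleftrightarrow> (\<exists>y\<in>Y'. p = (0, y))" for p
      using XY' by (cases p) (auto simp: cone_flat_def Hinf_def)
    have sub: "X \<subseteq> cone_hyp (hypk \<alpha> k) \<longleftrightarrow> Y' \<subseteq> hyp \<alpha>" if "\<alpha> \<in> P" for \<alpha> k
    proof
      assume A: "X \<subseteq> cone_hyp (hypk \<alpha> k)"
      show "Y' \<subseteq> hyp \<alpha>"
      proof
        fix y assume "y \<in> Y'"
        then have "((0::real), y) \<in> X" using memX by blast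
        then have "((0::real), y) \<in> cone_hyp (hypk \<alpha> k)" using A by blast
        then show "y \<in> hyp \<alpha>" using cone_hyp_zero[OF nz[OF that]] by (simp add: hyp_def)
      qed
    next
      assume "Y' \<subseteq> hyp \<alpha>"
      then show "X \<subseteq> cone_hyp (hypk \<alpha> k)"
        using cone_hyp_zero[OF nz[OF that]] memX by (auto simp: hyp_def)
    qed
    have "loc (cone_arr D) X = insert Hinf {H \<in> cone_hyp ` D. X \<subseteq> H}"
      unfolding loc_def cone_arr_def using HinfX by auto
    also have "{H \<in> cone_hyp ` D. X \<subseteq> H} = cone_hyp ` deform P (loc (hyp ` P) Y') a b"
    proof
      show "{H \<in> cone_hyp ` D. X \<subseteq> H} \<subseteq> cone_hyp ` deform P (loc (hyp ` P) Y') a b"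
      proof
        fix H assume "H \<in> {H \<in> cone_hyp ` D. X \<subseteq> H}"
        then obtain \<alpha> k where h: "H = cone_hyp (hypk \<alpha> k)" "\<alpha> \<in> P"
          "- int (a (hyp \<alpha>)) \<le> k" "k \<le> int (b (hyp \<alpha>))" "X \<subseteq> H"
          unfolding D_def deform_def by auto
        then have "Y' \<subseteq> hyp \<alpha>" using sub by auto
        then have "hypk \<alpha> k \<in> deform P (loc (hyp ` P) Y') a b"
          using h unfolding deform_def loc_def by blast
        then show "H \<in> cone_hyp ` deform P (loc (hyp ` P) Y') a b" using h by auto
      qed
      show "cone_hyp ` deform P (loc (hyp ` P) Y') a b \<subseteq> {H \<in> cone_hyp ` D. X \<subseteq> H}"
      proof
        fix H assume "H \<in> cone_hyp ` deform P (loc (hyp ` P) Y') a b"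
        then obtain \<alpha> k where h: "H = cone_hyp (hypk \<alpha> k)" "\<alpha> \<in> P"
          "- int (a (hyp \<alpha>)) \<le> k" "k \<le> int (b (hyp \<alpha>))" "Y' \<subseteq> hyp \<alpha>"
          unfolding deform_def loc_def by auto
        then have "X \<subseteq> H" using sub by auto
        moreover have "hypk \<alpha> k \<in> D" using h unfolding D_def deform_def by blast
        ultimately show "H \<in> {H \<in> cone_hyp ` D. X \<subseteq> H}" using h by auto
      qed
    qed
    finally show "loc (cone_arr D) X = cone_arr (deform P (loc (hyp ` P) Y') a b)"
      unfolding cone_arr_def .
    have eq: "hyp \<alpha> \<in> loc (hyp ` P) Y' \<longleftrightarrow> hyp \<alpha> \<in> refl_arr (parabolic \<Phi> Y')"
      if "\<alpha> \<in> P" for \<alpha>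
    proof
      have fix_eq: "{x. refl u x = x} = hyp u" if "u \<noteq> 0" for u :: 'a
        using that by (auto simp: refl_def hyp_def inner_commute)
      assume "hyp \<alpha> \<in> loc (hyp ` P) Y'"
      then have Ys: "Y' \<subseteq> hyp \<alpha>" by (simp add: loc_def)
      have "refl \<alpha> \<circ> id \<in> weyl_group \<Phi>"
        using PPhi that by (blast intro: weyl_group.intros)
      then have "refl \<alpha> \<in> parabolic \<Phi> Y'"
        using Ys fix_eq[OF nz[OF that]] by (auto simp: parabolic_def)
      moreover have "is_reflection (refl \<alpha>)" using nz[OF that] by (auto simp: is_reflection_def)
      ultimately show "hyp \<alpha> \<in> refl_arr (parabolic \<Phi> Y')"
        unfolding refl_arr_def using fix_eq[OF nz[OF that]] by blast
    next
      assume "hyp \<alpha> \<in> refl_arr (parabolic \<Phi> Y')"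
      then obtain w where w: "hyp \<alpha> = {x. w x = x}" "w \<in> parabolic \<Phi> Y'"
        unfolding refl_arr_def by auto
      then have "Y' \<subseteq> hyp \<alpha>" by (auto simp: parabolic_def)
      then show "hyp \<alpha> \<in> loc (hyp ` P) Y'" using that by (simp add: loc_def)
    qed
    have "deform P (loc (hyp ` P) Y') a b = deform P (refl_arr (parabolic \<Phi> Y')) a b"
      unfolding deform_def using eq by blast
    then show "cone_arr (deform P (loc (hyp ` P) Y') a b)
              = cone_arr (deform P (refl_arr (parabolic \<Phi> Y')) a b)" by simp
  qed
  show ?thesis using part1 part2 unfolding D_def by blast
qed

end
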